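(* Let $0<a<b$ and let $R_n, C_n$ be the effective resistance and effective conductance of the random network $T_n$ defined in the context. There exists a constant $K$ (depending only on $a,b$) such that for all $t>0$ and $n\ge1$, $$\mathbb{P}\left(\left|R_n-\frac{1}{\mathbb{E}C_n}\right|>t\right)\le \frac{K}{t^2},$$ and consequently $\mathbb{E}\left|R_n-1/\mathbb{E}C_n\right|\le 1+K$.
   Context: For $n\ge1$, $T_n$ is the edge-rooted tree consisting of a root vertex $r$ joined by a single edge to a vertex $v$, where $v$ is the root of a complete binary tree with $n-1$ levels (so $T_n$ has $2^{n-1}$ leaves at distance $n$ from $r$). The depth $d(e)$ of an edge $e$ is the number of edges on the path that starts with $e$ and ends at $r$; the edge at $r$ has depth $1$. Each edge $e$ is given resistance $r_e=2^{d(e)-1}X_e$, with the $X_e$ i.i.d. copies of a random variable $X$ taking values in $[a,b]$, $0<a<b$. $R_n$ is the effective resistance between $r$ and the set of leaves of $T_n$, and $C_n=1/R_n$ is the effective conductance. *)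

theory Defs
  imports "HOL-Probability.Probability"
begin

text \<open>Edges of T_n are encoded by bool lists: the list p encodes the edge of depth
  length p + 1 reached from v by following the turns p (the empty list is the edge
  at the root r).\<close>

definition tree_edges :: "nat \<Rightarrow> bool list set" where
  "tree_edges n = {p. length p < n}"

text \<open>Resistance of edge p: 2^(d(e)-1) * X_e with d(e) = length p + 1.\<close>
definition edge_res :: "(bool list \<Rightarrow> real) \<Rightarrow> bool list \<Rightarrow> real" where
  "edge_res X p = 2 ^ length p * X p"

text \<open>sub_res X m p: effective resistance between the top endpoint of edge p and the
  leaves below it, where m is the number of edges on each path from there to a leaf
  (series/parallel reduction, which computes the effective resistance on a tree).\<close>
fun sub_res :: "(bool list \<Rightarrow> real) \<Rightarrow> nat \<Rightarrow> bool list \<Rightarrow> real" where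
  "sub_res X 0 p = 0"
| "sub_res X (Suc 0) p = edge_res X p"
| "sub_res X (Suc (Suc m)) p = edge_res X p +
     1 / (1 / sub_res X (Suc m) (p @ [False]) + 1 / sub_res X (Suc m) (p @ [True]))"

definition eff_res :: "(bool list \<Rightarrow> real) \<Rightarrow> nat \<Rightarrow> real" where
  "eff_res X n = sub_res X n []"

definition eff_cond :: "(bool list \<Rightarrow> real) \<Rightarrow> nat \<Rightarrow> real" where
  "eff_cond X n = 1 / eff_res X n"

definition tree_space :: "real measure \<Rightarrow> nat \<Rightarrow> (bool list \<Rightarrow> real) measure" where
  "tree_space D n = PiM (tree_edges n) (\<lambda>_. D)"

end

theory Submission
  imports Defs
begin

definition cn :: "(bool list \<Rightarrow> real) \<Rightarrow> nat \<Rightarrow> bool list \<Rightarrow> real" where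
  "cn \<omega> m p = 2 ^ length p / sub_res \<omega> m p"

lemma cn_1: "cn \<omega> (Suc 0) p = 1 / \<omega> p"
  by (simp add: cn_def edge_res_def)

lemma cn_SS: "cn \<omega> (Suc (Suc m)) p =
   1 / (\<omega> p + 2 / (cn \<omega> (Suc m) (p @ [False]) + cn \<omega> (Suc m) (p @ [True])))"
proof -
  define s1 where "s1 = sub_res \<omega> (Suc m) (p @ [False])"
  define s2 where "s2 = sub_res \<omega> (Suc m) (p @ [True])"
  define k where "k = length p"
  have "1 / s1 + 1 / s2 = (cn \<omega> (Suc m) (p @ [False]) + cn \<omega> (Suc m) (p @ [True])) / 2 ^ (k+1)"
    by (simp add: cn_def s1_def s2_def k_def add_divide_distrib)
  then have e: "1 / (1 / s1 + 1 / s2) = 2 ^ (k+1) / (cn \<omega> (Suc m) (p @ [False]) + cn \<omega> (Suc m) (p @ [True]))"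
    by simp
  define c1 where "c1 = cn \<omega> (Suc m) (p @ [False])"
  define c2 where "c2 = cn \<omega> (Suc m) (p @ [True])"
  have "cn \<omega> (Suc (Suc m)) p = 2 ^ k / (2 ^ k * \<omega> p + 1 / (1 / s1 + 1 / s2))"
    by (simp add: cn_def edge_res_def s1_def s2_def k_def)
  also have "\<dots> = 2 ^ k / (2 ^ k * (\<omega> p + 2 / (c1 + c2)))"
    unfolding e c1_def[symmetric] c2_def[symmetric] by (simp add: algebra_simps)
  also have "\<dots> = 1 / (\<omega> p + 2 / (c1 + c2))" by simp
  finally show ?thesis by (simp add: c1_def c2_def)
qed


lemma sub_res_cong:
  "(\<And>q. length q < m \<Longrightarrow> \<omega> (p @ q) = \<omega>' (p @ q)) \<Longrightarrow> sub_res \<omega> m p = sub_res \<omega>' m p"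
proof (induction \<omega> m p rule: sub_res.induct)
  case (1 X p) then show ?case by simp
next
  case (2 X p) then show ?case using 2[of "[]"] by (simp add: edge_res_def)
next
  case (3 X m p)
  have h1: "sub_res X (Suc m) (p @ [False]) = sub_res \<omega>' (Suc m) (p @ [False])"
    by (rule 3(1)) (use 3(3) in \<open>metis Cons_eq_appendI append_assoc append_self_conv2 length_Cons not_less_eq\<close>)
  have h2: "sub_res X (Suc m) (p @ [True]) = sub_res \<omega>' (Suc m) (p @ [True])"
    by (rule 3(2)) (use 3(3) in \<open>metis Cons_eq_appendI append_assoc append_self_conv2 length_Cons not_less_eq\<close>)
  have "X p = \<omega>' p" using 3(3)[of "[]"] by simp
  then show ?case using h1 h2 by (simp add: edge_res_def)
qed

lemma cn_bounds:
  assumes "0 < a" "1 \<le> m" "\<And>q. length q < m \<Longrightarrow> a \<le> \<omega> (p @ q) \<and> \<omega> (p @ q) \<le> b"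
  shows "1 / (b * m) \<le> cn \<omega> m p \<and> cn \<omega> m p \<le> 1 / (a * m)"
  using assms(2,3)
proof (induction m arbitrary: p rule: nat_induct_at_least)
  case base
  then have "a \<le> \<omega> p" "\<omega> p \<le> b" using base[of "[]"] by auto
  then show ?case using assms(1) by (simp add: cn_1 frac_le)
next
  case (Suc m)
  obtain m' where m': "m = Suc m'" using Suc(1) by (cases m) auto
  have ch: "1 / (b * m) \<le> cn \<omega> m (p @ [c]) \<and> cn \<omega> m (p @ [c]) \<le> 1 / (a * m)" for c
    by (rule Suc(2)) (use Suc(3)[of "c # _"] in auto)
  have x: "a \<le> \<omega> p" "\<omega> p \<le> b" using Suc(3)[of "[]"] by auto
  define c1 where "c1 = cn \<omega> m (p @ [False])"
  define c2 where "c2 = cn \<omega> m (p @ [True])"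
  have b1: "1 / (b * m) \<le> c1" "c1 \<le> 1 / (a * m)" "1 / (b * m) \<le> c2" "c2 \<le> 1 / (a * m)"
    using ch[of False] ch[of True] by (auto simp: c1_def c2_def)
  have mpos: "(0::real) < m" using Suc(1) by simp
  have bpos: "0 < b" using x assms(1) by linarith
  have s1: "2 / (b * m) \<le> c1 + c2" "c1 + c2 \<le> 2 / (a * m)" using b1 by auto
  have sp: "0 < c1 + c2" using s1(1) mpos bpos
    by (smt (verit) divide_pos_pos mult_pos_pos)
  have t1: "a * m \<le> 2 / (c1 + c2)"
  proof -
    have "2 / (2 / (a * m)) \<le> 2 / (c1 + c2)"
      by (rule divide_left_mono) (use s1 sp assms(1) mpos in \<open>auto intro!: divide_pos_pos mult_pos_pos\<close>)
    then show ?thesis using assms(1) mpos by simp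
  qed
  have t2: "2 / (c1 + c2) \<le> b * m"
  proof -
    have "2 / (c1 + c2) \<le> 2 / (2 / (b * m))"
      by (rule divide_left_mono) (use s1 sp bpos mpos in auto)
    then show ?thesis using bpos mpos by simp
  qed
  have eq: "cn \<omega> (Suc m) p = 1 / (\<omega> p + 2 / (c1 + c2))"
    unfolding m' c1_def c2_def by (rule cn_SS)
  have l: "a * (Suc m) \<le> \<omega> p + 2 / (c1 + c2)" using t1 x by (simp add: algebra_simps)
  have u: "\<omega> p + 2 / (c1 + c2) \<le> b * (Suc m)" using t2 x by (simp add: algebra_simps)
  have ap: "0 < a * real (Suc m)" using assms(1) by simp
  show ?case unfolding eq
    using l u ap bpos by (auto intro!: divide_left_mono mult_pos_pos simp del: of_nat_Suc)
qed


lemma coord_meas: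
  assumes "sets D = sets borel" "i \<in> K"
  shows "(\<lambda>\<omega>. \<omega> i) \<in> borel_measurable (PiM K (\<lambda>_. D))"
proof -
  have "(\<lambda>\<omega>. \<omega> i) \<in> measurable (PiM K (\<lambda>_. D)) D"
    using assms(2) by (rule measurable_component_singleton)
  then show ?thesis using measurable_cong_sets[OF refl assms(1)] by blast
qed

lemma sub_res_meas:
  assumes "sets D = sets borel"
  shows "(\<And>q. length q < m \<Longrightarrow> p @ q \<in> K) \<Longrightarrow>
    (\<lambda>\<omega>. sub_res \<omega> m p) \<in> borel_measurable (PiM K (\<lambda>_. D))"
proof (induction m arbitrary: p rule: nat_less_induct)
  case (1 m)
  show ?case
  proof (cases m)
    case 0 then show ?thesis by simp
  next
    case (Suc m1)
    show ?thesis
    proof (cases m1)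
      case 0
      have "p \<in> K" using 1(2)[of "[]"] Suc by simp
      then show ?thesis using Suc 0 coord_meas[OF assms \<open>p \<in> K\<close>] by (simp add: edge_res_def)
    next
      case (Suc m2)
      have "p \<in> K" using 1(2)[of "[]"] \<open>m = Suc m1\<close> by simp
      have h: "(\<lambda>\<omega>. sub_res \<omega> m1 (p @ [c])) \<in> borel_measurable (PiM K (\<lambda>_. D))" for c
        by (rule 1(1)[rule_format]) (use \<open>m = Suc m1\<close> 1(2)[of "c # _"] in auto)
      show ?thesis
        unfolding \<open>m = Suc m1\<close> Suc sub_res.simps edge_res_def
        using h[of False] h[of True] coord_meas[OF assms \<open>p \<in> K\<close>] unfolding Suc
        by measurable
    qed
  qed
qed

lemma cn_meas:
  assumes "sets D = sets borel" "\<And>q. length q < m \<Longrightarrow> p @ q \<in> K"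
  shows "(\<lambda>\<omega>. cn \<omega> m p) \<in> borel_measurable (PiM K (\<lambda>_. D))"
  unfolding cn_def using sub_res_meas[OF assms] by measurable


lemma space_D: "sets D = sets borel \<Longrightarrow> space D = UNIV"
  by (metis sets_eq_imp_space_eq space_borel)

lemma indep_prod:
  fixes f g :: "(bool list \<Rightarrow> real) \<Rightarrow> real"
  assumes D: "prob_space D" "sets D = sets borel" and I: "finite I" "I \<noteq> {}"
    and AB: "A \<inter> B = {}" "A \<subseteq> I" "B \<subseteq> I"
    and f: "f \<in> borel_measurable (PiM A (\<lambda>_. D))" and g: "g \<in> borel_measurable (PiM B (\<lambda>_. D))"
    and fi: "integrable (PiM I (\<lambda>_. D)) (\<lambda>\<omega>. f (restrict \<omega> A))"
    and gi: "integrable (PiM I (\<lambda>_. D)) (\<lambda>\<omega>. g (restrict \<omega> B))"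
  shows "(\<integral>\<omega>. f (restrict \<omega> A) * g (restrict \<omega> B) \<partial>PiM I (\<lambda>_. D)) =
     (\<integral>\<omega>. f (restrict \<omega> A) \<partial>PiM I (\<lambda>_. D)) * (\<integral>\<omega>. g (restrict \<omega> B) \<partial>PiM I (\<lambda>_. D))"
proof -
  define M where "M = PiM I (\<lambda>_. D)"
  interpret prob_space M unfolding M_def by (rule prob_space_PiM) (use D in auto)
  define X where "X i \<omega> = (if i \<in> I then \<omega> i else (0::real))" for i and \<omega> :: "bool list \<Rightarrow> real"
  have rv: "random_variable D (X i)" for i
  proof (cases "i \<in> I")
    case True then show ?thesis unfolding X_def M_def by simp
  next
    case False then show ?thesis unfolding X_def using space_D[OF D(2)] by simp
  qed
  have "distr M (PiM I (\<lambda>_. D)) (\<lambda>x. \<lambda>i\<in>I. X i x) = distr M M (\<lambda>x. x)"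
    by (rule distr_cong) (auto simp: M_def X_def space_PiM PiE_def extensional_def restrict_def fun_eq_iff)
  also have "\<dots> = M" by simp
  also have "\<dots> = PiM I (\<lambda>i. distr M D (X i))"
    unfolding M_def
  proof (rule PiM_cong)
    fix i assume i: "i \<in> I"
    have "distr (PiM I (\<lambda>_. D)) D (X i) = distr (PiM I (\<lambda>_. D)) D (\<lambda>\<omega>. \<omega> i)"
      by (rule distr_cong) (auto simp: X_def i)
    also have "\<dots> = D" by (rule distr_PiM_component) (use D i in auto)
    finally show "D = distr (PiM I (\<lambda>_. D)) D (X i)" by simp
  qed simp
  finally have ind: "indep_vars (\<lambda>_. D) X I"
    using indep_vars_iff_distr_eq_PiM[OF I(2) rv] by simp
  have iv: "indep_var (PiM A (\<lambda>_. D)) (\<lambda>\<omega>. restrict (\<lambda>i. X i \<omega>) A) (PiM B (\<lambda>_. D)) (\<lambda>\<omega>. restrict (\<lambda>i. X i \<omega>) B)"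
    by (rule indep_var_restrict[OF ind AB])
  have iv2: "indep_var borel (f \<circ> (\<lambda>\<omega>. restrict (\<lambda>i. X i \<omega>) A)) borel (g \<circ> (\<lambda>\<omega>. restrict (\<lambda>i. X i \<omega>) B))"
    by (rule indep_var_compose[OF iv f g])
  have eA: "\<omega> \<in> space M \<Longrightarrow> restrict (\<lambda>i. X i \<omega>) A = restrict \<omega> A" for \<omega>
    using AB by (auto simp: X_def restrict_def fun_eq_iff)
  have eB: "\<omega> \<in> space M \<Longrightarrow> restrict (\<lambda>i. X i \<omega>) B = restrict \<omega> B" for \<omega>
    using AB by (auto simp: X_def restrict_def fun_eq_iff)
  have iv3: "indep_var borel (\<lambda>\<omega>. f (restrict (\<lambda>i. X i \<omega>) A)) borel (\<lambda>\<omega>. g (restrict (\<lambda>i. X i \<omega>) B))"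
    using iv2 by (simp add: comp_def)
  have fi': "integrable M (\<lambda>\<omega>. f (restrict (\<lambda>i. X i \<omega>) A))"
  proof -
    have "integrable M (\<lambda>\<omega>. f (restrict (\<lambda>i. X i \<omega>) A)) \<longleftrightarrow> integrable M (\<lambda>\<omega>. f (restrict \<omega> A))"
      by (rule Bochner_Integration.integrable_cong) (auto simp: eA)
    then show ?thesis using fi by (simp add: M_def)
  qed
  have gi': "integrable M (\<lambda>\<omega>. g (restrict (\<lambda>i. X i \<omega>) B))"
  proof -
    have "integrable M (\<lambda>\<omega>. g (restrict (\<lambda>i. X i \<omega>) B)) \<longleftrightarrow> integrable M (\<lambda>\<omega>. g (restrict \<omega> B))"
      by (rule Bochner_Integration.integrable_cong) (auto simp: eB)
    then show ?thesis using gi by (simp add: M_def)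
  qed
  have "(\<integral>\<omega>. f (restrict \<omega> A) * g (restrict \<omega> B) \<partial>M) = (\<integral>\<omega>. f (restrict (\<lambda>i. X i \<omega>) A) * g (restrict (\<lambda>i. X i \<omega>) B) \<partial>M)"
    by (rule Bochner_Integration.integral_cong) (auto simp: eA eB)
  also have "\<dots> = (\<integral>\<omega>. f (restrict (\<lambda>i. X i \<omega>) A) \<partial>M) * (\<integral>\<omega>. g (restrict (\<lambda>i. X i \<omega>) B) \<partial>M)"
    by (rule indep_var_lebesgue_integral[OF iv3 fi' gi'])
  also have "\<dots> = (\<integral>\<omega>. f (restrict \<omega> A) \<partial>M) * (\<integral>\<omega>. g (restrict \<omega> B) \<partial>M)"
    by (intro arg_cong2[where f="(*)"] Bochner_Integration.integral_cong) (auto simp: eA eB)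
  finally show ?thesis by (simp add: M_def)
qed


lemma pw_bound:
  fixes a b x s \<mu> m :: real
  assumes "0 < a" "a \<le> x" "x \<le> b" "0 < m"
    "1/(b*m) \<le> s" "s \<le> 1/(a*m)" "1/(b*m) \<le> \<mu>" "\<mu> \<le> 1/(a*m)"
  shows "(1/(x + 1/s) - 1/(a + 1/\<mu>))^2 \<le> 5/4 * (s - \<mu>)^2 + 5 * ((b-a)^2 / (a^4 * (m+1)^4))"
proof -
  have bp: "0 < b" using assms by linarith
  have bm: "0 < 1/(b*m)" using bp assms(4) by simp
  have sp: "0 < s" using assms(5) bm by linarith
  have mp: "0 < \<mu>" using assms(7) bm by linarith
  define p where "p = 1/(x + 1/s) - 1/(x + 1/\<mu>)"
  define q where "q = 1/(x + 1/\<mu>) - 1/(a + 1/\<mu>)"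
  have pq: "(p + q)^2 \<le> 5/4 * p^2 + 5 * q^2"
  proof -
    have "0 \<le> (p/2 - 2*q)^2" by simp
    then show ?thesis by (simp add: power2_eq_square algebra_simps)
  qed
  have xp: "0 \<le> x" using assms by linarith
  have p_eq: "p = (s - \<mu>) / ((x * s + 1) * (x * \<mu> + 1))"
  proof -
    have h1: "0 < x * s + 1" "0 < x * \<mu> + 1" using sp mp xp by (auto intro: add_nonneg_pos)
    have e1: "1/(x + 1/s) = s/(x * s + 1)" using sp by (simp add: field_simps)
    have e2: "1/(x + 1/\<mu>) = \<mu>/(x * \<mu> + 1)" using mp by (simp add: field_simps)
    show ?thesis unfolding p_def e1 e2 using h1
      by (simp add: diff_frac_eq) (simp add: algebra_simps)
  qed
  have d1: "1 \<le> (x * s + 1) * (x * \<mu> + 1)"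
  proof -
    have "1 \<le> x * s + 1" "1 \<le> x * \<mu> + 1" using sp mp xp by auto
    then have "1 * 1 \<le> (x * s + 1) * (x * \<mu> + 1)" by (intro mult_mono) auto
    then show ?thesis by simp
  qed
  have "\<bar>p\<bar> \<le> \<bar>s - \<mu>\<bar>"
  proof -
    have "\<bar>p\<bar> = \<bar>s - \<mu>\<bar> / ((x * s + 1) * (x * \<mu> + 1))" unfolding p_eq using d1 by (simp add: abs_div)
    also have "\<dots> \<le> \<bar>s - \<mu>\<bar> / 1" by (rule divide_left_mono) (use d1 in auto)
    finally show ?thesis by simp
  qed
  then have p2: "p^2 \<le> (s - \<mu>)^2" by (metis abs_le_square_iff power2_abs)
  have imu: "a * m \<le> 1/\<mu>"
  proof -
    have "1/(1/(a*m)) \<le> 1/\<mu>" by (rule divide_left_mono) (use assms mp in auto)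
    then show ?thesis by simp
  qed
  have am1: "a * (m+1) \<le> a + 1/\<mu>" "a * (m+1) \<le> x + 1/\<mu>" using imu assms by (auto simp: algebra_simps)
  have amp: "0 < a * (m+1)" using assms by simp
  have q_eq: "q = (a - x) / ((x + 1/\<mu>)*(a + 1/\<mu>))"
    unfolding q_def using am1 amp by (simp add: field_simps)
  have den: "(a*(m+1))^2 \<le> (x + 1/\<mu>)*(a + 1/\<mu>)"
    using am1 amp by (simp add: power2_eq_square mult_mono)
  have hpos: "0 < x + 1/\<mu>" "0 < a + 1/\<mu>" using am1 amp by linarith+
  have "\<bar>q\<bar> \<le> (b - a) / (a*(m+1))^2"
  proof -
    have "\<bar>q\<bar> = (x - a) / ((x + 1/\<mu>)*(a + 1/\<mu>))"
      unfolding q_eq using hpos assms by (simp add: abs_div abs_mult)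
    also have "\<dots> \<le> (b - a) / ((x + 1/\<mu>)*(a + 1/\<mu>))"
      by (rule divide_right_mono) (use assms hpos in auto)
    also have "\<dots> \<le> (b - a) / (a*(m+1))^2"
      by (rule divide_left_mono) (use assms den amp hpos in \<open>auto intro!: mult_pos_pos\<close>)
    finally show ?thesis .
  qed
  then have "q^2 \<le> ((b - a) / (a*(m+1))^2)^2"
    by (metis abs_ge_zero order_trans power2_abs power_mono)
  also have "\<dots> = (b-a)^2 / (a^4 * (m+1)^4)" by (simp add: power_divide power_mult_distrib flip: power_mult)
  finally have q2: "q^2 \<le> (b-a)^2 / (a^4 * (m+1)^4)" .
  have "1/(x + 1/s) - 1/(a + 1/\<mu>) = p + q" by (simp add: p_def q_def)
  then show ?thesis using pq p2 q2 by simp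
qed


lemma var_le_shift:
  fixes Z :: "'a \<Rightarrow> real"
  assumes "prob_space M" "integrable M Z" "integrable M (\<lambda>x. (Z x)^2)"
  shows "(\<integral>x. (Z x - (\<integral>y. Z y \<partial>M))^2 \<partial>M) \<le> (\<integral>x. (Z x - k)^2 \<partial>M)"
proof -
  interpret prob_space M by fact
  have "(\<integral>x. (Z x - (\<integral>y. Z y \<partial>M))^2 \<partial>M) = (\<integral>x. (Z x)^2 \<partial>M) - (\<integral>y. Z y \<partial>M)^2"
    by (rule variance_eq) (use assms in auto)
  moreover have "(\<integral>x. (Z x - k)^2 \<partial>M) = (\<integral>x. (Z x)^2 \<partial>M) - 2 * k * (\<integral>y. Z y \<partial>M) + k^2"
  proof -
    have "(\<lambda>x. (Z x - k)^2) = (\<lambda>x. (Z x)^2 - (2 * k * Z x - k^2))"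
      by (auto simp: power2_eq_square algebra_simps)
    then show ?thesis using assms prob_space by (simp add: algebra_simps)
  qed
  moreover have "0 \<le> ((\<integral>y. Z y \<partial>M) - k)^2" by simp
  ultimately show ?thesis by (simp add: power2_eq_square algebra_simps)
qed

lemma bounded_int:
  fixes f :: "'a \<Rightarrow> real"
  assumes "prob_space M" "f \<in> borel_measurable M" "AE x in M. \<bar>f x\<bar> \<le> B"
  shows "integrable M f"
proof -
  interpret prob_space M by fact
  show ?thesis by (rule integrable_const_bound[of _ B]) (use assms in auto)
qed


lemma abs_prod_le: "\<bar>u::real\<bar> \<le> c \<Longrightarrow> \<bar>v\<bar> \<le> c \<Longrightarrow> \<bar>u * v\<bar> \<le> c^2"
  by (simp add: abs_mult power2_eq_square mult_mono)

lemma abs_sq_le: "\<bar>u::real\<bar> \<le> c \<Longrightarrow> \<bar>u^2\<bar> \<le> c^2"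
  using abs_prod_le[of u c u] by (simp add: power2_eq_square)

lemma box_abs: "l \<le> (u::real) \<Longrightarrow> u \<le> c \<Longrightarrow> l \<le> v \<Longrightarrow> v \<le> c \<Longrightarrow> 0 \<le> l \<Longrightarrow> \<bar>u - v\<bar> \<le> c"
  by (simp add: abs_le_iff)

lemma half_abs: "\<bar>u::real\<bar> \<le> c \<Longrightarrow> \<bar>v\<bar> \<le> c \<Longrightarrow> \<bar>(u + v) / 2\<bar> \<le> c"
  by (simp add: abs_le_iff)

lemma int_sq:
  fixes f :: "'a \<Rightarrow> real"
  assumes "prob_space M" "f \<in> borel_measurable M" "AE x in M. \<bar>f x\<bar> \<le> B"
  shows "integrable M (\<lambda>x. (f x)^2)"
proof (rule bounded_int[OF assms(1), of _ "B^2"])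
  show "(\<lambda>x. (f x)^2) \<in> borel_measurable M" using assms(2) by measurable
  show "AE x in M. \<bar>(f x)^2\<bar> \<le> B^2" using assms(3) by (rule eventually_mono) (rule abs_sq_le)
qed

lemma int_prod:
  fixes f g :: "'a \<Rightarrow> real"
  assumes "prob_space M" "f \<in> borel_measurable M" "g \<in> borel_measurable M"
    "AE x in M. \<bar>f x\<bar> \<le> B" "AE x in M. \<bar>g x\<bar> \<le> B"
  shows "integrable M (\<lambda>x. f x * g x)"
proof (rule bounded_int[OF assms(1), of _ "B^2"])
  show "(\<lambda>x. f x * g x) \<in> borel_measurable M" using assms(2,3) by measurable
  show "AE x in M. \<bar>f x * g x\<bar> \<le> B^2" using assms(4,5) by eventually_elim (rule abs_prod_le)
qed


lemma sq_half: "((u1::real) + u2)/2 - (e1 + e2)/2 = ((u1 - e1) + (u2 - e2))/2"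
  by (simp add: algebra_simps diff_divide_distrib add_divide_distrib)

lemma sq_expand: "(((x::real) + y)/2)^2 = 1/4 * (x^2 + y^2 + 2 * (x * y))"
  by (simp add: power2_eq_square field_simps)

lemma step_var:
  fixes M :: "'a measure" and X c1 c2 Z :: "'a \<Rightarrow> real" and a b m :: real
  assumes P: "prob_space M"
    and meas: "X \<in> borel_measurable M" "c1 \<in> borel_measurable M" "c2 \<in> borel_measurable M"
    and ab: "0 < a" "a \<le> b" "0 < m"
    and AEb: "AE \<omega> in M. a \<le> X \<omega> \<and> X \<omega> \<le> b \<and> 1/(b*m) \<le> c1 \<omega> \<and> c1 \<omega> \<le> 1/(a*m)
                 \<and> 1/(b*m) \<le> c2 \<omega> \<and> c2 \<omega> \<le> 1/(a*m)"
    and cov: "(\<integral>\<omega>. (c1 \<omega> - (\<integral>y. c1 y \<partial>M)) * (c2 \<omega> - (\<integral>y. c2 y \<partial>M)) \<partial>M) = 0"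
    and Zd: "\<And>\<omega>. Z \<omega> = 1/(X \<omega> + 2/(c1 \<omega> + c2 \<omega>))"
  shows "(\<integral>\<omega>. (Z \<omega> - (\<integral>y. Z y \<partial>M))^2 \<partial>M) \<le>
     5/16 * ((\<integral>\<omega>. (c1 \<omega> - (\<integral>y. c1 y \<partial>M))^2 \<partial>M) + (\<integral>\<omega>. (c2 \<omega> - (\<integral>y. c2 y \<partial>M))^2 \<partial>M))
     + 5 * ((b-a)^2/(a^4*(m+1)^4))"
proof -
  interpret prob_space M by fact
  define E1 where "E1 = (\<integral>y. c1 y \<partial>M)"
  define E2 where "E2 = (\<integral>y. c2 y \<partial>M)"
  define \<mu> where "\<mu> = (E1 + E2) / 2"
  define \<kappa> where "\<kappa> = 1/(a + 1/\<mu>)"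
  define \<beta> where "\<beta> = (b-a)^2/(a^4*(m+1)^4)"
  define c where "c = 1/(a*m)"
  have bp: "0 < b" using ab by linarith
  have bm: "0 < 1/(b*m)" using bp ab by simp
  have Zeq: "Z = (\<lambda>\<omega>. 1/(X \<omega> + 2/(c1 \<omega> + c2 \<omega>)))" using Zd by auto
  have Zm: "Z \<in> borel_measurable M" unfolding Zeq using meas by measurable
  have AEc1: "AE \<omega> in M. \<bar>c1 \<omega>\<bar> \<le> c" using AEb by eventually_elim (insert bm c_def, elim conjE, intro abs_leI; linarith)
  have AEc2: "AE \<omega> in M. \<bar>c2 \<omega>\<bar> \<le> c" using AEb by eventually_elim (insert bm c_def, elim conjE, intro abs_leI; linarith)
  have i1: "integrable M c1" by (rule bounded_int[OF P meas(2) AEc1])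
  have i2: "integrable M c2" by (rule bounded_int[OF P meas(3) AEc2])
  have cst: "(\<integral>x. k \<partial>M) = k" for k :: real by (simp add: prob_space)
  have E1b: "1/(b*m) \<le> E1 \<and> E1 \<le> c"
  proof
    have "(\<integral>x. 1/(b*m) \<partial>M) \<le> E1" unfolding E1_def
      by (rule integral_mono_AE) (use i1 AEb in \<open>auto elim: eventually_mono\<close>)
    then show "1/(b*m) \<le> E1" by (simp add: prob_space)
    have "E1 \<le> (\<integral>x. c \<partial>M)" unfolding E1_def
      by (rule integral_mono_AE) (use i1 AEb in \<open>auto simp: c_def elim: eventually_mono\<close>)
    then show "E1 \<le> c" by (simp add: prob_space)
  qed
  have E2b: "1/(b*m) \<le> E2 \<and> E2 \<le> c"
  proof
    have "(\<integral>x. 1/(b*m) \<partial>M) \<le> E2" unfolding E2_def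
      by (rule integral_mono_AE) (use i2 AEb in \<open>auto elim: eventually_mono\<close>)
    then show "1/(b*m) \<le> E2" by (simp add: prob_space)
    have "E2 \<le> (\<integral>x. c \<partial>M)" unfolding E2_def
      by (rule integral_mono_AE) (use i2 AEb in \<open>auto simp: c_def elim: eventually_mono\<close>)
    then show "E2 \<le> c" by (simp add: prob_space)
  qed
  have mub: "1/(b*m) \<le> \<mu>" "\<mu> \<le> c" using E1b E2b by (auto simp: \<mu>_def)
  have AEZ: "AE \<omega> in M. \<bar>Z \<omega>\<bar> \<le> 1/a"
    using AEb
  proof eventually_elim
    case (elim \<omega>)
    have "0 < c1 \<omega> + c2 \<omega>" using elim bm by linarith
    then have "0 \<le> 2/(c1 \<omega> + c2 \<omega>)" by simp
    then have d: "a \<le> X \<omega> + 2/(c1 \<omega> + c2 \<omega>)" using elim by linarith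
    then have "1/(X \<omega> + 2/(c1 \<omega> + c2 \<omega>)) \<le> 1/a" using ab by (intro divide_left_mono) auto
    moreover have "0 \<le> 1/(X \<omega> + 2/(c1 \<omega> + c2 \<omega>))" using d ab by simp
    ultimately show ?case by (simp add: Zd)
  qed
  have iZ: "integrable M Z" by (rule bounded_int[OF P Zm AEZ])
  have iZ2: "integrable M (\<lambda>x. (Z x)^2)"
    by (rule int_sq[OF P Zm AEZ])
  have s1: "(\<integral>\<omega>. (Z \<omega> - (\<integral>y. Z y \<partial>M))^2 \<partial>M) \<le> (\<integral>\<omega>. (Z \<omega> - \<kappa>)^2 \<partial>M)"
    by (rule var_le_shift[OF P iZ iZ2])
  define S where "S \<omega> = (c1 \<omega> + c2 \<omega>)/2" for \<omega>
  have Sm: "S \<in> borel_measurable M" unfolding S_def using meas by measurable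
  have AEd: "AE \<omega> in M. \<bar>c1 \<omega> - E1\<bar> \<le> c \<and> \<bar>c2 \<omega> - E2\<bar> \<le> c \<and> \<bar>S \<omega> - \<mu>\<bar> \<le> c"
    using AEb
  proof eventually_elim
    case (elim \<omega>)
    from elim have f0: "1/(b*m) \<le> c1 \<omega>" "c1 \<omega> \<le> 1/(a*m)" "1/(b*m) \<le> c2 \<omega>" "c2 \<omega> \<le> 1/(a*m)" by blast+
    note f = f0[folded c_def]
    have g: "1/(b*m) \<le> E1" "E1 \<le> c" "1/(b*m) \<le> E2" "E2 \<le> c" using E1b E2b by auto
    have h: "S \<omega> - \<mu> = ((c1 \<omega> - E1) + (c2 \<omega> - E2)) / 2" by (simp add: S_def \<mu>_def field_simps)
    have 1: "\<bar>c1 \<omega> - E1\<bar> \<le> c" using f g bm by (intro box_abs[of "1/(b*m)"]) auto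
    have 2: "\<bar>c2 \<omega> - E2\<bar> \<le> c" using f g bm by (intro box_abs[of "1/(b*m)"]) auto
    have 3: "\<bar>S \<omega> - \<mu>\<bar> \<le> c" unfolding h using 1 2 by (rule half_abs)
    show ?case using 1 2 3 by simp
  qed
  have iA: "integrable M (\<lambda>\<omega>. (Z \<omega> - \<kappa>)^2)"
  proof (rule int_sq[OF P])
    show "(\<lambda>\<omega>. Z \<omega> - \<kappa>) \<in> borel_measurable M" using Zm by measurable
    show "AE \<omega> in M. \<bar>Z \<omega> - \<kappa>\<bar> \<le> 1/a + \<bar>\<kappa>\<bar>" using AEZ by (rule eventually_mono) linarith
  qed
  have iB: "integrable M (\<lambda>\<omega>. (S \<omega> - \<mu>)^2)"
  proof (rule int_sq[OF P])
    show "(\<lambda>\<omega>. S \<omega> - \<mu>) \<in> borel_measurable M" using Sm by measurable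
    show "AE \<omega> in M. \<bar>S \<omega> - \<mu>\<bar> \<le> c" using AEd by (rule eventually_mono) blast
  qed
  have s2: "(\<integral>\<omega>. (Z \<omega> - \<kappa>)^2 \<partial>M) \<le> (\<integral>\<omega>. 5/4 * (S \<omega> - \<mu>)^2 + 5 * \<beta> \<partial>M)"
  proof (rule integral_mono_AE[OF iA])
    show "integrable M (\<lambda>\<omega>. 5/4 * (S \<omega> - \<mu>)^2 + 5 * \<beta>)" using iB by simp
    show "AE \<omega> in M. (Z \<omega> - \<kappa>)^2 \<le> 5/4 * (S \<omega> - \<mu>)^2 + 5 * \<beta>"
      using AEb
    proof eventually_elim
      case (elim \<omega>)
      have sb: "1/(b*m) \<le> S \<omega>" "S \<omega> \<le> 1/(a*m)" using elim by (auto simp: S_def)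
      have "Z \<omega> = 1/(X \<omega> + 1/S \<omega>)" by (simp add: Zd S_def)
      have pw: "(1/(X \<omega> + 1/S \<omega>) - 1/(a + 1/\<mu>))^2 \<le> 5/4*(S \<omega> - \<mu>)^2 + 5*((b-a)^2/(a^4*(m+1)^4))"
      proof (rule pw_bound)
        show "0 < a" "0 < m" using ab by auto
        show "a \<le> X \<omega>" "X \<omega> \<le> b" using elim by auto
        show "1/(b*m) \<le> S \<omega>" "S \<omega> \<le> 1/(a*m)" by (rule sb(1), rule sb(2))
        show "1/(b*m) \<le> \<mu>" by (rule mub(1))
        show "\<mu> \<le> 1/(a*m)" using mub(2) unfolding c_def .
      qed
      then show ?case unfolding \<kappa>_def \<beta>_def using \<open>Z \<omega> = 1/(X \<omega> + 1/S \<omega>)\<close> by simp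
    qed
  qed
  have s3: "(\<integral>\<omega>. 5/4 * (S \<omega> - \<mu>)^2 + 5 * \<beta> \<partial>M) = 5/4 * (\<integral>\<omega>. (S \<omega> - \<mu>)^2 \<partial>M) + 5 * \<beta>"
  proof -
    have "(\<integral>\<omega>. 5/4 * (S \<omega> - \<mu>)^2 + 5 * \<beta> \<partial>M) = (\<integral>\<omega>. 5/4 * (S \<omega> - \<mu>)^2 \<partial>M) + (\<integral>\<omega>. 5 * \<beta> \<partial>M)"
      by (rule Bochner_Integration.integral_add) (use iB in auto)
    then show ?thesis by (simp add: prob_space)
  qed
  have m11: "(\<lambda>\<omega>. c1 \<omega> - E1) \<in> borel_measurable M" using meas(2) by measurable
  have m12: "(\<lambda>\<omega>. c2 \<omega> - E2) \<in> borel_measurable M" using meas(3) by measurable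
  note m1 = m11 m12
  have ae1: "AE \<omega> in M. \<bar>c1 \<omega> - E1\<bar> \<le> c" using AEd by (rule eventually_mono) blast
  have ae2: "AE \<omega> in M. \<bar>c2 \<omega> - E2\<bar> \<le> c" using AEd by (rule eventually_mono) blast
  have ia: "integrable M (\<lambda>\<omega>. (c1 \<omega> - E1)^2)" by (rule int_sq[OF P m1(1) ae1])
  have ib: "integrable M (\<lambda>\<omega>. (c2 \<omega> - E2)^2)" by (rule int_sq[OF P m1(2) ae2])
  have ic: "integrable M (\<lambda>\<omega>. (c1 \<omega> - E1) * (c2 \<omega> - E2))" by (rule int_prod[OF P m1 ae1 ae2])
  have s4: "(\<integral>\<omega>. (S \<omega> - \<mu>)^2 \<partial>M) =
     1/4 * ((\<integral>\<omega>. (c1 \<omega> - E1)^2 \<partial>M) + (\<integral>\<omega>. (c2 \<omega> - E2)^2 \<partial>M))"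
  proof -
    have "(\<lambda>\<omega>. (S \<omega> - \<mu>)^2) = (\<lambda>\<omega>. 1/4 * ((c1 \<omega> - E1)^2 + (c2 \<omega> - E2)^2 + 2 * ((c1 \<omega> - E1) * (c2 \<omega> - E2))))"
      unfolding S_def \<mu>_def sq_half sq_expand by (rule refl)
    then have "(\<integral>\<omega>. (S \<omega> - \<mu>)^2 \<partial>M) = 1/4 * ((\<integral>\<omega>. (c1 \<omega> - E1)^2 \<partial>M) + (\<integral>\<omega>. (c2 \<omega> - E2)^2 \<partial>M)
        + 2 * (\<integral>\<omega>. (c1 \<omega> - E1) * (c2 \<omega> - E2) \<partial>M))"
      using ia ib ic by simp
    then show ?thesis using cov by (simp add: E1_def E2_def)
  qed
  show ?thesis using s1 s2 s3 s4[unfolded E1_def E2_def] \<beta>_def by linarith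
qed


lemma finite_tree_edges: "finite (tree_edges n)"
proof -
  have "tree_edges n \<subseteq> {xs. set xs \<subseteq> (UNIV::bool set) \<and> length xs \<le> n}"
    by (auto simp: tree_edges_def)
  moreover have "finite {xs. set xs \<subseteq> (UNIV::bool set) \<and> length xs \<le> n}"
    by (rule finite_lists_length_le) simp
  ultimately show ?thesis by (rule finite_subset)
qed

definition D0 :: "real \<Rightarrow> real \<Rightarrow> real" where
  "D0 a b = max (169 / a^2) (40 * ((b-a)^2 / a^4))"

lemma arith_step:
  fixes m d \<beta> :: real
  assumes "13 \<le> m" "40 * \<beta> \<le> d" "0 \<le> \<beta>"
  shows "5/8 * (d / m^4) + 5 * (\<beta> / (m+1)^4) \<le> d / (m+1)^4"
proof -
  have mp: "0 < m" using assms by simp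
  have r: "(m+1)/m \<le> 14/13" using assms mp by (simp add: divide_le_eq)
  have r0: "0 \<le> (m+1)/m" using mp by simp
  have "((m+1)/m)^4 \<le> (14/13)^4" by (rule power_mono[OF r r0])
  also have "\<dots> \<le> 7/5" by (simp add: power_divide)
  finally have r4: "(m+1)^4 \<le> 7/5 * m^4" using mp by (simp add: power_divide divide_le_eq)
  have d0: "0 \<le> d" using assms by simp
  have m4: "0 < m^4" "0 < (m+1)^4" using mp by simp_all
  have "5/8 * (d / m^4) = 5/8 * d * (m+1)^4 / (m^4 * (m+1)^4)" using m4 by (simp add: field_simps)
  also have "\<dots> \<le> 5/8 * d * (7/5 * m^4) / (m^4 * (m+1)^4)"
    by (intro divide_right_mono mult_left_mono r4) (use d0 m4 in auto)
  also have "\<dots> = 7/8 * d / (m+1)^4" using m4 by (simp add: field_simps)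
  finally have "5/8 * (d / m^4) \<le> 7/8 * d / (m+1)^4" .
  moreover have "5 * (\<beta> / (m+1)^4) \<le> 1/8 * d / (m+1)^4"
  proof -
    have "(5*\<beta>)/(m+1)^4 \<le> (1/8*d)/(m+1)^4" by (rule divide_right_mono) (use assms m4 in auto)
    then show ?thesis by simp
  qed
  ultimately have "5/8 * (d / m^4) + 5 * (\<beta> / (m+1)^4) \<le> 7/8 * d / (m+1)^4 + 1/8 * d / (m+1)^4"
    by linarith
  also have "\<dots> = d / (m+1)^4" by (simp add: field_simps)
  finally show ?thesis .
qed


lemma cn_restrict:
  assumes "\<And>q. length q < m \<Longrightarrow> p @ q \<in> A"
  shows "cn (restrict \<omega> A) m p = cn \<omega> m p"
  unfolding cn_def using assms by (subst sub_res_cong[where \<omega>="restrict \<omega> A" and \<omega>'=\<omega>]) auto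

lemma int_const: "prob_space M \<Longrightarrow> integrable M (\<lambda>x. c::real)"
  by (rule bounded_int[of _ _ "\<bar>c\<bar>"]) auto

lemma lin_comb: "(vv::real) \<le> 5/16*(v1+v2) + 5*tt \<Longrightarrow> v1 \<le> dd \<Longrightarrow> v2 \<le> dd \<Longrightarrow> tt = tt' \<Longrightarrow> 5/8*dd + 5*tt' \<le> ee \<Longrightarrow> vv \<le> ee"
proof -
  assume h: "vv \<le> 5/16*(v1+v2) + 5*tt" "v1 \<le> dd" "v2 \<le> dd" "tt = tt'" "5/8*dd + 5*tt' \<le> ee"
  have "5/16*(v1+v2) \<le> 5/16*(2*dd)" by (rule mult_left_mono) (use h in auto)
  then show ?thesis using h by linarith
qed

lemma arith_triv:
  fixes k d a :: real
  assumes "1 \<le> k" "k \<le> 13" "169 / a^2 \<le> d" "0 < a"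
  shows "1 / (a^2 * k^2) \<le> d / k^4"
proof -
  have kp: "0 < k" using assms by simp
  have "1 / (a^2 * k^2) = (k^2 / a^2) / k^4" using kp assms(4) by (simp add: field_simps power2_eq_square power4_eq_xxxx)
  also have "\<dots> \<le> d / k^4"
  proof (rule divide_right_mono)
    have "k^2 \<le> 13^2" by (rule power_mono) (use assms in auto)
    then have "k^2 / a^2 \<le> 169 / a^2" by (intro divide_right_mono) auto
    then show "k^2 / a^2 \<le> d" using assms(3) by linarith
  qed (use kp in simp)
  finally show ?thesis .
qed

lemma var_tree:
  fixes D :: "real measure" and a b :: real and n m :: nat and p :: "bool list"
  assumes PD: "prob_space D" and SD: "sets D = sets borel" and AD: "AE x in D. a \<le> x \<and> x \<le> b"
    and ab: "0 < a" "a < b" and mn: "1 \<le> m" "length p + m \<le> n"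
  shows "(\<integral>\<omega>. (cn \<omega> m p - (\<integral>y. cn y m p \<partial>PiM (tree_edges n) (\<lambda>_. D)))^2 \<partial>PiM (tree_edges n) (\<lambda>_. D))
      \<le> D0 a b / (real m)^4"
proof -
  define I where "I = tree_edges n"
  define M where "M = PiM I (\<lambda>_. D)"
  have fin: "finite I" unfolding I_def by (rule finite_tree_edges)
  have PM: "prob_space M" unfolding M_def by (rule prob_space_PiM) (use PD in auto)
  have AEI: "AE \<omega> in M. \<forall>i\<in>I. a \<le> \<omega> i \<and> \<omega> i \<le> b"
    unfolding M_def
    by (rule eventually_ball_finite[OF fin]) (use AD PD in \<open>auto intro: AE_PiM_component\<close>)
  have sub: "p @ q \<in> I" if "length p + m \<le> n" "length q < m" for p q m
    using that by (simp add: I_def tree_edges_def)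
  have meas: "(\<lambda>\<omega>. cn \<omega> m p) \<in> borel_measurable M" if "length p + m \<le> n" for p m
    unfolding M_def by (rule cn_meas[OF SD]) (use sub that in auto)
  have AEcn: "AE \<omega> in M. 1 / (b * m) \<le> cn \<omega> m p \<and> cn \<omega> m p \<le> 1 / (a * m)"
    if "1 \<le> m" "length p + m \<le> n" for p m
    using AEI
  proof (rule eventually_mono)
    fix \<omega> assume H: "\<forall>i\<in>I. a \<le> \<omega> i \<and> \<omega> i \<le> b"
    show "1 / (b * m) \<le> cn \<omega> m p \<and> cn \<omega> m p \<le> 1 / (a * m)"
      by (rule cn_bounds[OF ab(1) that(1)]) (use H sub[OF that(2)] in blast)
  qed
  have AEabs: "AE \<omega> in M. \<bar>cn \<omega> m p\<bar> \<le> 1 / (a * m)"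
    if "1 \<le> m" "length p + m \<le> n" for p m
    using AEcn[OF that]
  proof (rule eventually_mono)
    fix \<omega> assume H: "1 / (b * m) \<le> cn \<omega> m p \<and> cn \<omega> m p \<le> 1 / (a * m)"
    have "0 < 1 / (b * m)" using that ab by simp
    then show "\<bar>cn \<omega> m p\<bar> \<le> 1 / (a * m)" using H by (intro abs_leI) linarith+
  qed
  have triv: "(\<integral>\<omega>. (cn \<omega> m p - (\<integral>y. cn y m p \<partial>M))^2 \<partial>M) \<le> 1 / (a^2 * (real m)^2)"
    if "1 \<le> m" "length p + m \<le> n" for p m
  proof -
    have i: "integrable M (\<lambda>\<omega>. cn \<omega> m p)" by (rule bounded_int[OF PM meas[OF that(2)] AEabs[OF that]])
    have i2: "integrable M (\<lambda>\<omega>. (cn \<omega> m p)^2)" by (rule int_sq[OF PM meas[OF that(2)] AEabs[OF that]])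
    have "(\<integral>\<omega>. (cn \<omega> m p - (\<integral>y. cn y m p \<partial>M))^2 \<partial>M) \<le> (\<integral>\<omega>. (cn \<omega> m p - 0)^2 \<partial>M)"
      by (rule var_le_shift[OF PM i i2])
    also have "\<dots> \<le> (\<integral>\<omega>. (1 / (a * m))^2 \<partial>M)"
    proof (rule integral_mono_AE)
      show "integrable M (\<lambda>\<omega>. (cn \<omega> m p - 0)^2)" using i2 by simp
      show "integrable M (\<lambda>\<omega>. (1 / (a * m))^2)" by (rule bounded_int[OF PM, of _ "(1 / (a * m))^2"]) auto
      show "AE \<omega> in M. (cn \<omega> m p - 0)^2 \<le> (1 / (a * m))^2"
        using AEabs[OF that] by (rule eventually_mono) (metis abs_ge_zero diff_zero order_trans power2_abs power_mono)
    qed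
    also have "\<dots> = 1 / (a^2 * (real m)^2)" using PM by (simp add: prob_space.prob_space power_mult_distrib power_divide)
    finally show ?thesis .
  qed
  have D0a: "169 / a^2 \<le> D0 a b" and D0b: "40 * ((b-a)^2 / a^4) \<le> D0 a b" by (auto simp: D0_def)
  have main: "\<forall>p. length p + m \<le> n \<longrightarrow>
      (\<integral>\<omega>. (cn \<omega> m p - (\<integral>y. cn y m p \<partial>M))^2 \<partial>M) \<le> D0 a b / (real m)^4" if "1 \<le> m" for m
    using that
  proof (induction m rule: nat_induct_at_least)
    case base
    show ?case
    proof (intro allI impI)
      fix p :: "bool list" assume len: "length p + 1 \<le> n"
      have "(\<integral>\<omega>. (cn \<omega> 1 p - (\<integral>y. cn y 1 p \<partial>M))^2 \<partial>M) \<le> 1 / (a^2 * (real 1)^2)"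
        by (rule triv) (use len in auto)
      also have "\<dots> \<le> D0 a b / (real 1)^4" by (rule arith_triv) (use D0a ab in auto)
      finally show "(\<integral>\<omega>. (cn \<omega> 1 p - (\<integral>y. cn y 1 p \<partial>M))^2 \<partial>M) \<le> D0 a b / (real 1)^4" .
    qed
  next
    case (Suc m)
    show ?case
    proof (intro allI impI)
      fix p :: "bool list" assume len: "length p + Suc m \<le> n"
      show "(\<integral>\<omega>. (cn \<omega> (Suc m) p - (\<integral>y. cn y (Suc m) p \<partial>M))^2 \<partial>M) \<le> D0 a b / (real (Suc m))^4"
      proof (cases "m < 13")
        case True
        have "(\<integral>\<omega>. (cn \<omega> (Suc m) p - (\<integral>y. cn y (Suc m) p \<partial>M))^2 \<partial>M) \<le> 1 / (a^2 * (real (Suc m))^2)"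
          by (rule triv) (use len in auto)
        also have "\<dots> \<le> D0 a b / (real (Suc m))^4" by (rule arith_triv) (use D0a ab True in auto)
        finally show ?thesis .
      next
        case False
        then have m13: "13 \<le> real m" by simp
        obtain m' where m': "m = Suc m'" using Suc(1) by (cases m) auto
        have lenc: "length (p @ [c]) + m \<le> n" for c using len by simp
        have pI: "p \<in> I" using sub[OF len, of "[]"] by simp
        define c1 where "c1 \<omega> = cn \<omega> m (p @ [False])" for \<omega>
        define c2 where "c2 \<omega> = cn \<omega> m (p @ [True])" for \<omega>
        have mc1: "c1 \<in> borel_measurable M" unfolding c1_def by (rule meas[OF lenc])
        have mc2: "c2 \<in> borel_measurable M" unfolding c2_def by (rule meas[OF lenc])
        have mX: "(\<lambda>\<omega>. \<omega> p) \<in> borel_measurable M" unfolding M_def by (rule coord_meas[OF SD pI])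
        have ic1: "integrable M c1" unfolding c1_def by (rule bounded_int[OF PM meas[OF lenc] AEabs[OF Suc(1) lenc]])
        have ic2: "integrable M c2" unfolding c2_def by (rule bounded_int[OF PM meas[OF lenc] AEabs[OF Suc(1) lenc]])
        have AEX: "AE \<omega> in M. a \<le> \<omega> p \<and> \<omega> p \<le> b" using AEI by (rule eventually_mono) (use pI in blast)
        have AEb: "AE \<omega> in M. a \<le> \<omega> p \<and> \<omega> p \<le> b \<and> 1/(b*real m) \<le> c1 \<omega> \<and> c1 \<omega> \<le> 1/(a*real m)
                 \<and> 1/(b*real m) \<le> c2 \<omega> \<and> c2 \<omega> \<le> 1/(a*real m)"
          using AEX AEcn[OF Suc(1) lenc[of False]] AEcn[OF Suc(1) lenc[of True]]
          by eventually_elim (simp only: c1_def c2_def)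
        have cov: "(\<integral>\<omega>. (c1 \<omega> - (\<integral>y. c1 y \<partial>M)) * (c2 \<omega> - (\<integral>y. c2 y \<partial>M)) \<partial>M) = 0"
        proof -
          define E1 where "E1 = (\<integral>y. c1 y \<partial>M)"
          define E2 where "E2 = (\<integral>y. c2 y \<partial>M)"
          define A where "A = {(p @ [False]) @ q | q. length q < m}"
          define B where "B = {(p @ [True]) @ q | q. length q < m}"
          have Asub: "\<And>q. length q < m \<Longrightarrow> (p @ [False]) @ q \<in> A" by (auto simp: A_def)
          have Bsub: "\<And>q. length q < m \<Longrightarrow> (p @ [True]) @ q \<in> B" by (auto simp: B_def)
          have AI: "A \<subseteq> I" using sub[OF lenc[of False]] by (auto simp: A_def)
          have BI: "B \<subseteq> I" using sub[OF lenc[of True]] by (auto simp: B_def)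
          have disj: "A \<inter> B = {}" by (auto simp: A_def B_def)
          have Ine: "I \<noteq> {}" using pI by auto
          have fA: "(\<lambda>\<omega>. cn \<omega> m (p @ [False]) - E1) \<in> borel_measurable (PiM A (\<lambda>_. D))"
            using cn_meas[OF SD Asub] by measurable
          have gB: "(\<lambda>\<omega>. cn \<omega> m (p @ [True]) - E2) \<in> borel_measurable (PiM B (\<lambda>_. D))"
            using cn_meas[OF SD Bsub] by measurable
          have iA: "integrable (PiM I (\<lambda>_. D)) (\<lambda>\<omega>. cn (restrict \<omega> A) m (p @ [False]) - E1)"
          proof -
            have e: "(\<lambda>\<omega>. cn (restrict \<omega> A) m (p @ [False]) - E1) = (\<lambda>\<omega>. c1 \<omega> - E1)"
              by (simp add: cn_restrict[OF Asub] c1_def)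
            show ?thesis unfolding e M_def[symmetric]
              by (rule Bochner_Integration.integrable_diff[OF ic1 int_const[OF PM]])
          qed
          have iB: "integrable (PiM I (\<lambda>_. D)) (\<lambda>\<omega>. cn (restrict \<omega> B) m (p @ [True]) - E2)"
          proof -
            have e: "(\<lambda>\<omega>. cn (restrict \<omega> B) m (p @ [True]) - E2) = (\<lambda>\<omega>. c2 \<omega> - E2)"
              by (simp add: cn_restrict[OF Bsub] c2_def)
            show ?thesis unfolding e M_def[symmetric]
              by (rule Bochner_Integration.integrable_diff[OF ic2 int_const[OF PM]])
          qed
          have "(\<integral>\<omega>. (c1 \<omega> - E1) * (c2 \<omega> - E2) \<partial>M) = (\<integral>\<omega>. (c1 \<omega> - E1) \<partial>M) * (\<integral>\<omega>. (c2 \<omega> - E2) \<partial>M)"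
            using indep_prod[OF PD SD fin Ine disj AI BI fA gB iA iB]
            unfolding c1_def c2_def M_def by (simp only: cn_restrict[OF Asub] cn_restrict[OF Bsub])
          also have "(\<integral>\<omega>. (c1 \<omega> - E1) \<partial>M) = 0"
          proof -
            have "(\<integral>\<omega>. (c1 \<omega> - E1) \<partial>M) = (\<integral>\<omega>. c1 \<omega> \<partial>M) - (\<integral>\<omega>. E1 \<partial>M)"
              by (rule Bochner_Integration.integral_diff[OF ic1 int_const[OF PM]])
            also have "(\<integral>\<omega>. E1 \<partial>M) = E1" using PM by (simp add: prob_space.prob_space)
            finally show ?thesis by (simp add: E1_def)
          qed
          finally show ?thesis by (simp add: E1_def E2_def)
        qed
        have Zd: "cn \<omega> (Suc m) p = 1/(\<omega> p + 2/(c1 \<omega> + c2 \<omega>))" for \<omega>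
          unfolding c1_def c2_def m' by (rule cn_SS)
        have mpos: "0 < real m" using Suc(1) by simp
        have st: "(\<integral>\<omega>. (cn \<omega> (Suc m) p - (\<integral>y. cn y (Suc m) p \<partial>M))^2 \<partial>M) \<le>
           5/16 * ((\<integral>\<omega>. (c1 \<omega> - (\<integral>y. c1 y \<partial>M))^2 \<partial>M) + (\<integral>\<omega>. (c2 \<omega> - (\<integral>y. c2 y \<partial>M))^2 \<partial>M))
           + 5 * ((b-a)^2/(a^4*(real m+1)^4))"
          by (rule step_var[OF PM mX mc1 mc2 ab(1) _ mpos AEb cov Zd]) (use ab in simp)
        have V1: "(\<integral>\<omega>. (c1 \<omega> - (\<integral>y. c1 y \<partial>M))^2 \<partial>M) \<le> D0 a b / (real m)^4"
          unfolding c1_def using Suc(2) lenc[of False] by blast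
        have V2: "(\<integral>\<omega>. (c2 \<omega> - (\<integral>y. c2 y \<partial>M))^2 \<partial>M) \<le> D0 a b / (real m)^4"
          unfolding c2_def using Suc(2) lenc[of True] by blast
        have T: "(b-a)^2/(a^4*(real m+1)^4) = ((b-a)^2/a^4)/(real m+1)^4" by simp
        have ar: "5/8 * (D0 a b / (real m)^4) + 5 * (((b-a)^2/a^4) / (real m+1)^4) \<le> D0 a b / (real m+1)^4"
          by (rule arith_step[OF m13 D0b]) simp
        have sm: "real (Suc m) = real m + 1" by simp
        show ?thesis unfolding sm by (rule lin_comb[OF st V1 V2 T ar])
      qed
    qed
  qed
  show ?thesis unfolding I_def[symmetric] M_def[symmetric] using main[OF mn(1)] mn(2) by blast
qed


lemma final_bounds:
  fixes D :: "real measure" and a b t :: real and n :: nat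
  assumes PD: "prob_space D" and SD: "sets D = sets borel" and AD: "AE x in D. a \<le> x \<and> x \<le> b"
    and ab: "0 < a" "a < b" and n1: "1 \<le> n"
  defines "M \<equiv> tree_space D n"
  defines "EC \<equiv> integral\<^sup>L M (\<lambda>\<omega>. eff_cond \<omega> n)"
  shows "(\<forall>t::real. t > 0 \<longrightarrow>
             measure M {\<omega> \<in> space M. \<bar>eff_res \<omega> n - 1 / EC\<bar> > t} \<le> b^4 * D0 a b / t ^ 2)
          \<and> integral\<^sup>L M (\<lambda>\<omega>. \<bar>eff_res \<omega> n - 1 / EC\<bar>) \<le> 1 + b^4 * D0 a b"
proof -
  define I where "I = tree_edges n"
  have MI: "M = PiM I (\<lambda>_. D)" by (simp add: M_def I_def tree_space_def)
  have fin: "finite I" unfolding I_def by (rule finite_tree_edges)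
  have PM: "prob_space M" unfolding MI by (rule prob_space_PiM) (use PD in auto)
  have AEI: "AE \<omega> in M. \<forall>i\<in>I. a \<le> \<omega> i \<and> \<omega> i \<le> b"
    unfolding MI
    by (rule eventually_ball_finite[OF fin]) (use AD PD in \<open>auto intro: AE_PiM_component\<close>)
  have sub: "[] @ q \<in> I" if "length q < n" for q using that by (simp add: I_def tree_edges_def)
  have Ceq: "eff_cond \<omega> n = cn \<omega> n []" for \<omega> by (simp add: eff_cond_def eff_res_def cn_def)
  have Req: "eff_res \<omega> n = 1 / cn \<omega> n []" for \<omega> by (simp add: eff_res_def cn_def)
  define C where "C \<omega> = cn \<omega> n []" for \<omega>
  define c where "c = 1 / EC"
  have ECC: "EC = (\<integral>\<omega>. C \<omega> \<partial>M)" unfolding EC_def C_def Ceq ..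
  have Cm: "C \<in> borel_measurable M" unfolding C_def MI by (rule cn_meas[OF SD]) (use sub in auto)
  have bnp: "0 < 1 / (b * real n)" using ab n1 by simp
  have AEC: "AE \<omega> in M. 1 / (b * real n) \<le> C \<omega> \<and> C \<omega> \<le> 1 / (a * real n)"
    using AEI
  proof (rule eventually_mono)
    fix \<omega> assume H: "\<forall>i\<in>I. a \<le> \<omega> i \<and> \<omega> i \<le> b"
    show "1 / (b * real n) \<le> C \<omega> \<and> C \<omega> \<le> 1 / (a * real n)"
      unfolding C_def by (rule cn_bounds[OF ab(1) n1]) (use H sub in blast)
  qed
  have AECa: "AE \<omega> in M. \<bar>C \<omega>\<bar> \<le> 1 / (a * real n)"
    using AEC by (rule eventually_mono) (use bnp in \<open>intro abs_leI; linarith\<close>)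
  have iC: "integrable M C" by (rule bounded_int[OF PM Cm AECa])
  have ECb: "1 / (b * real n) \<le> EC" "EC \<le> 1 / (a * real n)"
  proof -
    have "(\<integral>\<omega>. 1 / (b * real n) \<partial>M) \<le> (\<integral>\<omega>. C \<omega> \<partial>M)"
      by (rule integral_mono_AE[OF int_const[OF PM] iC]) (use AEC in \<open>rule eventually_mono, blast\<close>)
    then show "1 / (b * real n) \<le> EC" unfolding ECC using PM by (simp add: prob_space.prob_space)
    have "(\<integral>\<omega>. C \<omega> \<partial>M) \<le> (\<integral>\<omega>. 1 / (a * real n) \<partial>M)"
      by (rule integral_mono_AE[OF iC int_const[OF PM]]) (use AEC in \<open>rule eventually_mono, blast\<close>)
    then show "EC \<le> 1 / (a * real n)" unfolding ECC using PM by (simp add: prob_space.prob_space)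
  qed
  have var: "(\<integral>\<omega>. (C \<omega> - EC)^2 \<partial>M) \<le> D0 a b / (real n)^4"
    using var_tree[OF PD SD AD ab n1, of "[]"] unfolding ECC C_def MI I_def by simp
  define R where "R \<omega> = eff_res \<omega> n" for \<omega>
  have Rm: "R \<in> borel_measurable M" unfolding R_def Req using Cm unfolding C_def by measurable
  have K0: "0 \<le> (b * real n)^4" by simp
  have pw: "(R \<omega> - c)^2 \<le> (b * real n)^4 * (C \<omega> - EC)^2"
    if H: "1 / (b * real n) \<le> C \<omega> \<and> C \<omega> \<le> 1 / (a * real n)" for \<omega>
  proof -
    have H1: "1 / (b * real n) \<le> C \<omega>" using H by blast
    have Cp: "0 < C \<omega>" using H1 bnp by linarith
    have Ep: "0 < EC" using ECb bnp by linarith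
    have "R \<omega> - c = (EC - C \<omega>) / (C \<omega> * EC)" unfolding R_def Req c_def C_def[symmetric]
      using Cp Ep by (simp add: field_simps)
    moreover have "1 / (b * real n)^2 \<le> C \<omega> * EC"
    proof -
      have "1 / (b * real n) * (1 / (b * real n)) \<le> C \<omega> * EC"
        using H1 ECb Cp bnp by (intro mult_mono) linarith+
      then show ?thesis by (simp add: power2_eq_square)
    qed
    ultimately have "\<bar>R \<omega> - c\<bar> \<le> \<bar>EC - C \<omega>\<bar> / (1 / (b * real n)^2)"
    proof -
      assume eq: "R \<omega> - c = (EC - C \<omega>) / (C \<omega> * EC)" and lb: "1 / (b * real n)^2 \<le> C \<omega> * EC"
      have "\<bar>R \<omega> - c\<bar> = \<bar>EC - C \<omega>\<bar> / (C \<omega> * EC)" unfolding eq using Cp Ep by (simp add: abs_div abs_mult)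
      also have "\<dots> \<le> \<bar>EC - C \<omega>\<bar> / (1 / (b * real n)^2)"
        by (rule divide_left_mono[OF lb]) (use Cp Ep bnp n1 ab in \<open>auto intro!: mult_pos_pos divide_pos_pos\<close>)
      finally show ?thesis .
    qed
    also have "\<dots> = (b * real n)^2 * \<bar>C \<omega> - EC\<bar>" by (simp add: abs_minus_commute)
    finally have h: "\<bar>R \<omega> - c\<bar> \<le> (b * real n)^2 * \<bar>C \<omega> - EC\<bar>" .
    have "(R \<omega> - c)^2 = \<bar>R \<omega> - c\<bar>^2" by simp
    also have "\<dots> \<le> ((b * real n)^2 * \<bar>C \<omega> - EC\<bar>)^2" by (rule power_mono[OF h]) simp
    also have "\<dots> = (b * real n)^4 * (C \<omega> - EC)^2" by (simp add: power_mult_distrib flip: power_mult)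
    finally show ?thesis .
  qed
  have eq4: "(b * real n)^4 * y^2 = ((b * real n)^2 * y)^2" for y :: real
    by (simp add: power2_eq_square power4_eq_xxxx mult_ac)
  have AERc: "AE \<omega> in M. \<bar>R \<omega> - c\<bar> \<le> (b * real n)^2 * (2 / (a * real n))"
    using AEC
  proof (rule eventually_mono)
    fix \<omega> assume H: "1 / (b * real n) \<le> C \<omega> \<and> C \<omega> \<le> 1 / (a * real n)"
    have H1: "1 / (b * real n) \<le> C \<omega>" "C \<omega> \<le> 1 / (a * real n)" using H by blast+
    have "\<bar>C \<omega> - EC\<bar> \<le> 2 / (a * real n)" using H1 ECb bnp by (intro abs_leI) linarith+
    then have "(C \<omega> - EC)^2 \<le> (2 / (a * real n))^2"
      by (metis abs_ge_zero order_trans power2_abs power_mono)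
    then have "(b * real n)^4 * (C \<omega> - EC)^2 \<le> (b * real n)^4 * (2 / (a * real n))^2"
      by (rule mult_left_mono) simp
    then have "(R \<omega> - c)^2 \<le> ((b * real n)^2 * (2 / (a * real n)))^2" using pw[OF H] unfolding eq4 by linarith
    then have "\<bar>R \<omega> - c\<bar> \<le> \<bar>(b * real n)^2 * (2 / (a * real n))\<bar>" by (simp only: abs_le_square_iff)
    then show "\<bar>R \<omega> - c\<bar> \<le> (b * real n)^2 * (2 / (a * real n))" using ab by simp
  qed
  have mRc: "(\<lambda>\<omega>. R \<omega> - c) \<in> borel_measurable M" using Rm by measurable
  have iR2: "integrable M (\<lambda>\<omega>. (R \<omega> - c)^2)" by (rule int_sq[OF PM mRc AERc])
  have iCE: "integrable M (\<lambda>\<omega>. (C \<omega> - EC)^2)"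
  proof (rule int_sq[OF PM])
    show "(\<lambda>\<omega>. C \<omega> - EC) \<in> borel_measurable M" using Cm by measurable
    show "AE \<omega> in M. \<bar>C \<omega> - EC\<bar> \<le> 2 / (a * real n)"
      using AEC
    proof (rule eventually_mono)
      fix \<omega> assume H: "1 / (b * real n) \<le> C \<omega> \<and> C \<omega> \<le> 1 / (a * real n)"
      have H1: "1 / (b * real n) \<le> C \<omega>" "C \<omega> \<le> 1 / (a * real n)" using H by blast+
      show "\<bar>C \<omega> - EC\<bar> \<le> 2 / (a * real n)" using H1 ECb bnp by (intro abs_leI) linarith+
    qed
  qed
  have W: "(\<integral>\<omega>. (R \<omega> - c)^2 \<partial>M) \<le> b^4 * D0 a b"
  proof -
    have "(\<integral>\<omega>. (R \<omega> - c)^2 \<partial>M) \<le> (\<integral>\<omega>. (b * real n)^4 * (C \<omega> - EC)^2 \<partial>M)"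
    proof (rule integral_mono_AE[OF iR2])
      show "integrable M (\<lambda>\<omega>. (b * real n)^4 * (C \<omega> - EC)^2)" using iCE by simp
      show "AE \<omega> in M. (R \<omega> - c)^2 \<le> (b * real n)^4 * (C \<omega> - EC)^2"
        using AEC by (rule eventually_mono) (rule pw)
    qed
    also have "\<dots> = (b * real n)^4 * (\<integral>\<omega>. (C \<omega> - EC)^2 \<partial>M)" by simp
    also have "\<dots> \<le> (b * real n)^4 * (D0 a b / (real n)^4)" by (rule mult_left_mono[OF var K0])
    also have "\<dots> = b^4 * D0 a b" using n1 by (simp add: power_mult_distrib)
    finally show ?thesis .
  qed
  have tail: "measure M {\<omega> \<in> space M. \<bar>R \<omega> - c\<bar> > t} \<le> b^4 * D0 a b / t ^ 2" if tp: "t > 0" for t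
  proof -
    define S where "S = {\<omega> \<in> space M. \<bar>R \<omega> - c\<bar> > t}"
    have Ss: "S \<in> sets M" unfolding S_def using Rm by measurable
    have "measure M S = (\<integral>\<omega>. (indicator S \<omega> :: real) \<partial>M)" using Ss by (simp add: Int_absorb2 sets.sets_into_space)
    also have "\<dots> \<le> (\<integral>\<omega>. (R \<omega> - c)^2 / t^2 \<partial>M)"
    proof (rule integral_mono)
      show "integrable M (indicator S :: _ \<Rightarrow> real)"
      proof -
        have m: "(indicator S :: _ \<Rightarrow> real) \<in> borel_measurable M" using Ss by (rule borel_measurable_indicator)
        have "AE x in M. \<bar>indicator S x :: real\<bar> \<le> 1" by (simp add: indicator_def)
        then show ?thesis by (rule bounded_int[OF PM m])
      qed
      show "integrable M (\<lambda>\<omega>. (R \<omega> - c)^2 / t^2)" using iR2 by simp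
      fix \<omega> assume "\<omega> \<in> space M"
      show "(indicator S \<omega> :: real) \<le> (R \<omega> - c)^2 / t^2"
      proof (cases "\<omega> \<in> S")
        case True
        then have "t < \<bar>R \<omega> - c\<bar>" by (simp add: S_def)
        then have "t^2 \<le> \<bar>R \<omega> - c\<bar>^2" using tp by (intro power_mono) auto
        then show ?thesis using True tp by simp
      qed simp
    qed
    also have "\<dots> = (\<integral>\<omega>. (R \<omega> - c)^2 \<partial>M) / t^2" by simp
    also have "\<dots> \<le> b^4 * D0 a b / t^2" by (rule divide_right_mono[OF W]) simp
    finally show ?thesis by (simp add: S_def)
  qed
  have L1: "(\<integral>\<omega>. \<bar>R \<omega> - c\<bar> \<partial>M) \<le> 1 + b^4 * D0 a b"
  proof -
    have iA: "integrable M (\<lambda>\<omega>. \<bar>R \<omega> - c\<bar>)"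
      by (rule bounded_int[OF PM]) (use mRc AERc in auto)
    have "(\<integral>\<omega>. \<bar>R \<omega> - c\<bar> \<partial>M) \<le> (\<integral>\<omega>. 1 + (R \<omega> - c)^2 \<partial>M)"
    proof (rule integral_mono[OF iA])
      show "integrable M (\<lambda>\<omega>. 1 + (R \<omega> - c)^2)" by (rule Bochner_Integration.integrable_add[OF int_const[OF PM] iR2])
      fix \<omega> show "\<bar>R \<omega> - c\<bar> \<le> 1 + (R \<omega> - c)^2"
      proof (cases "\<bar>R \<omega> - c\<bar> \<le> 1")
        case True then show ?thesis by (simp add: add_increasing2)
      next
        case False
        then have "\<bar>R \<omega> - c\<bar> * 1 \<le> \<bar>R \<omega> - c\<bar> * \<bar>R \<omega> - c\<bar>" by (intro mult_left_mono) auto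
        then show ?thesis by (simp add: power2_eq_square)
      qed
    qed
    also have "\<dots> = 1 + (\<integral>\<omega>. (R \<omega> - c)^2 \<partial>M)"
      using iR2 PM by (simp add: Bochner_Integration.integral_add[OF int_const[OF PM] iR2] prob_space.prob_space)
    finally show ?thesis using W by linarith
  qed
  show ?thesis using tail L1 by (simp add: R_def c_def)
qed


theorem corollary4:
  fixes a b :: real
  assumes "0 < a" and "a < b"
  shows "\<exists>K::real. \<forall>D :: real measure.
    (prob_space D \<and> sets D = sets borel \<and> (AE x in D. a \<le> x \<and> x \<le> b)) \<longrightarrow>
    (\<forall>n::nat. n \<ge> 1 \<longrightarrow>
      (let M = tree_space D n;
           EC = integral\<^sup>L M (\<lambda>\<omega>. eff_cond \<omega> n)
       in (\<forall>t::real. t > 0 \<longrightarrow>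
             measure M {\<omega> \<in> space M. \<bar>eff_res \<omega> n - 1 / EC\<bar> > t} \<le> K / t ^ 2)
          \<and> integral\<^sup>L M (\<lambda>\<omega>. \<bar>eff_res \<omega> n - 1 / EC\<bar>) \<le> 1 + K))"
proof (intro exI[of _ "b^4 * D0 a b"] allI impI)
  fix D :: "real measure" and n :: nat
  assume H: "prob_space D \<and> sets D = sets borel \<and> (AE x in D. a \<le> x \<and> x \<le> b)" and n1: "n \<ge> 1"
  have PD: "prob_space D" and SD: "sets D = sets borel" and AD: "AE x in D. a \<le> x \<and> x \<le> b"
    using H by auto
  show "let M = tree_space D n;
           EC = integral\<^sup>L M (\<lambda>\<omega>. eff_cond \<omega> n)
       in (\<forall>t::real. t > 0 \<longrightarrow>
             measure M {\<omega> \<in> space M. \<bar>eff_res \<omega> n - 1 / EC\<bar> > t} \<le> b^4 * D0 a b / t ^ 2)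
          \<and> integral\<^sup>L M (\<lambda>\<omega>. \<bar>eff_res \<omega> n - 1 / EC\<bar>) \<le> 1 + b^4 * D0 a b"
    unfolding Let_def by (rule final_bounds[OF PD SD AD assms n1])
qed

end
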